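(* Fix $s<\frac12$. Let $\phi^{(\omega)}=\sum_{n\ge1}\frac{g_n(\omega)}{z_n}e_n$. There exist constants $c>0$, $C>0$ and $N_*\ge1$ such that for all integers $N_0\ge N_*$ and all $\lambda>0$, $$p\Big(\Big\{\omega:\ N_0^{\frac12-s}\Big\|\sum_{n\ge N_0}\frac{g_n(\omega)}{z_n}e_n\Big\|_{H^s}>\lambda\Big\}\Big)\le C\exp(-\lambda^c).$$
   Context: $B_2\subset\mathbb{R}^2$ is the open unit disc; $(e_n)_{n\ge1}$ are the $L^2$-normalized real radial Dirichlet eigenfunctions of $-\Delta$ on $B_2$ with eigenvalues $z_n^2$, $0<z_1<z_2<\cdots$. For $f=\sum_n\hat f(n)e_n$, $\|f\|_{H^s}=\big(\sum_n z_n^{2s}|\hat f(n)|^2\big)^{1/2}$. $(g_n)_{n\ge1}$ are independent normalized complex Gaussian random variables on a probability space $(\Omega,\mathcal{M},p)$. *)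

theory Defs
  imports "HOL-Probability.Probability"
begin

definition bessel_J0 :: "real \<Rightarrow> real" where
  "bessel_J0 x = (\<Sum>k. (-1) ^ k / (fact k)\<^sup>2 * (x / 2) ^ (2 * k))"

text \<open>The radial Dirichlet eigenvalues of -Laplacian on the unit disc are z_n^2, where
  0 < z_1 < z_2 < ... are the positive zeros of J_0 (e_n(x) = c_n J_0(z_n |x|)).
  z 0 = 0 is an auxiliary starting value; z n for n >= 1 is the n-th positive zero.\<close>
fun bessel_zero :: "nat \<Rightarrow> real" where
  "bessel_zero 0 = 0"
| "bessel_zero (Suc n) = Inf {x. bessel_zero n < x \<and> bessel_J0 x = 0}"

text \<open>H^s norm of f = sum_n a_n e_n (index n >= 1), in terms of coefficients:
  (sum_n z_n^(2s) |a_n|^2)^(1/2); equal to infinity if the series diverges.\<close>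
definition Hs_norm :: "real \<Rightarrow> (nat \<Rightarrow> complex) \<Rightarrow> ereal" where
  "Hs_norm s a =
     (if summable (\<lambda>n. bessel_zero (Suc n) powr (2 * s) * (cmod (a (Suc n)))\<^sup>2)
      then ereal (sqrt (\<Sum>n. bessel_zero (Suc n) powr (2 * s) * (cmod (a (Suc n)))\<^sup>2))
      else \<infinity>)"

text \<open>Law of a normalized complex Gaussian: real and imaginary parts independent N(0,1/2),
  so that E|g|^2 = 1.\<close>
definition complex_gaussian :: "complex measure" where
  "complex_gaussian =
     distr (density lborel (normal_density 0 (sqrt (1/2)))
            \<Otimes>\<^sub>M density lborel (normal_density 0 (sqrt (1/2))))
           borel (\<lambda>(x, y). Complex x y)"

end

theory Submission
  imports Defs
begin

definition FJ :: "real fps" where "FJ = Abs_fps (\<lambda>k. (-1)^k / (fact k)^2)"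
lemma FJ_radius: "fps_conv_radius FJ = \<infinity>"
  unfolding fps_conv_radius_def
proof (rule conv_radius_inftyI'')
  fix z :: real
  have "summable (\<lambda>n. norm z ^ n /\<^sub>R fact n)" using exp_converges[of "norm z"] by (simp add: sums_iff)
  then have "summable (\<lambda>n. norm (fps_nth FJ n * z ^ n))"
  proof (rule summable_comparison_test[rotated], intro exI allI impI)
    fix n :: nat
    have "fact n \<le> (fact n::real)^2" by (simp add: power2_eq_square)
    then show "norm (norm (fps_nth FJ n * z ^ n)) \<le> norm z ^ n /\<^sub>R fact n"
      by (simp add: FJ_def abs_mult power_abs divide_simps mult_left_mono)
  qed
  thus "summable (\<lambda>n. fps_nth FJ n * z ^ n)" by (rule summable_norm_cancel)
qed

definition "F1 = fps_deriv FJ"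
definition "F2 = fps_deriv F1"

lemma F1_radius: "fps_conv_radius F1 = \<infinity>"
  using fps_conv_radius_deriv[of FJ] FJ_radius unfolding F1_def by simp
lemma F2_radius: "fps_conv_radius F2 = \<infinity>"
  using fps_conv_radius_deriv[of F1] F1_radius unfolding F2_def by simp

lemma FJ_rec: "fps_nth FJ (Suc n) = - fps_nth FJ n / (real (Suc n))^2"
proof -
  have f: "(fact (Suc n) :: real) = real (Suc n) * fact n" by simp
  show ?thesis by (simp add: FJ_def f) (simp add: power2_eq_square algebra_simps)
qed

lemma FJ_ode: "fps_X * F2 + F1 + FJ = 0"
proof (rule fps_ext)
  fix n :: nat
  have a: "fps_nth F1 n = real (Suc n) * fps_nth FJ (Suc n)" by (simp add: F1_def)
  have b: "fps_nth (fps_X * F2) n = real n * fps_nth F1 n"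
    by (cases n) (auto simp: F2_def F1_def)
  have "fps_nth (fps_X * F2 + F1 + FJ) n = real (Suc n) * real (Suc n) * fps_nth FJ (Suc n) + fps_nth FJ n"
    using a b by (simp add: algebra_simps)
  also have "\<dots> = 0" by (simp add: FJ_rec power2_eq_square del: of_nat_Suc)
  finally show "fps_nth (fps_X * F2 + F1 + FJ) n = fps_nth 0 n" by simp
qed

lemma rad_inf: "fps_conv_radius f = \<infinity> \<Longrightarrow> fps_conv_radius (g::real fps) = \<infinity> \<Longrightarrow> fps_conv_radius (f*g) = \<infinity> \<and> fps_conv_radius (f+g) = \<infinity>"
  using fps_conv_radius_mult[of f g] fps_conv_radius_add[of f g] by (simp add: top_unique[symmetric])

lemma dFJ: "(eval_fps FJ has_real_derivative eval_fps F1 t) (at t)"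
  using has_field_derivative_eval_fps[of t FJ UNIV] FJ_radius by (simp add: F1_def)
lemma dF1: "(eval_fps F1 has_real_derivative eval_fps F2 t) (at t)"
  using has_field_derivative_eval_fps[of t F1 UNIV] F1_radius by (simp add: F2_def)

definition "J x = eval_fps FJ (x^2/4)"
definition "Jd x = x/2 * eval_fps F1 (x^2/4)"
definition "Jdd x = x^2/4 * eval_fps F2 (x^2/4) + eval_fps F1 (x^2/4) / 2"

lemma bessel_J: "bessel_J0 x = J x"
  unfolding bessel_J0_def J_def eval_fps_def
  by (simp add: FJ_def power_mult power_divide)

lemma J_deriv: "(J has_real_derivative Jd x) (at x within A)"
proof -
  have "((\<lambda>x. eval_fps FJ (x^2/4)) has_real_derivative (eval_fps F1 (x^2/4) * (2*x/4))) (at x within A)"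
    by (rule DERIV_chain2[OF dFJ]) (auto intro!: derivative_eq_intros)
  then show ?thesis unfolding J_def Jd_def by (simp add: field_simps)
qed

lemma Jd_deriv: "(Jd has_real_derivative Jdd x) (at x within A)"
proof -
  have "((\<lambda>x. eval_fps F1 (x^2/4)) has_real_derivative (eval_fps F2 (x^2/4) * (2*x/4))) (at x within A)"
    by (rule DERIV_chain2[OF dF1]) (auto intro!: derivative_eq_intros)
  then have "((\<lambda>x. x/2 * eval_fps F1 (x^2/4)) has_real_derivative (1/2 * eval_fps F1 (x^2/4) + x/2 * (eval_fps F2 (x^2/4) * (2*x/4)))) (at x within A)"
    by (auto intro!: derivative_eq_intros)
  then show ?thesis unfolding Jd_def Jdd_def by (simp add: field_simps power2_eq_square)
qed

lemma J_ode: "x * Jdd x + Jd x + x * J x = 0"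
proof -
  let ?t = "x^2/4"
  have "eval_fps (fps_X * F2 + F1 + FJ) ?t = 0" by (simp add: FJ_ode)
  moreover have "eval_fps (fps_X * F2 + F1 + FJ) ?t = ?t * eval_fps F2 ?t + eval_fps F1 ?t + eval_fps FJ ?t"
    using rad_inf[OF fps_conv_radius_fps_X F2_radius] rad_inf[OF F1_radius FJ_radius] F1_radius F2_radius FJ_radius
    by (simp add: eval_fps_add eval_fps_mult rad_inf)
  ultimately have "?t * eval_fps F2 ?t + eval_fps F1 ?t + eval_fps FJ ?t = 0" by simp
  then have "x * (?t * eval_fps F2 ?t + eval_fps F1 ?t + eval_fps FJ ?t) = 0" by simp
  then show ?thesis unfolding J_def Jd_def Jdd_def by (simp add: field_simps)
qed

lemma J0: "J 0 = 1" unfolding J_def by (simp add: eval_fps_at_0 FJ_def)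
lemma J_cont: "continuous_on A J"
  using J_deriv by (meson DERIV_isCont continuous_at_imp_continuous_on)
lemma Jd_cont: "continuous_on A Jd"
  using Jd_deriv by (meson DERIV_isCont continuous_at_imp_continuous_on)

definition "u x = sqrt x * J x"
definition "ud x = J x / (2 * sqrt x) + sqrt x * Jd x"
definition "qq x = 1 + 1 / (4 * x^2)"

lemma u_deriv: "x > 0 \<Longrightarrow> (u has_real_derivative ud x) (at x)"
  unfolding u_def ud_def
  by (auto intro!: derivative_eq_intros J_deriv simp: field_simps)

lemma ud_deriv: assumes "x > 0" shows "(ud has_real_derivative (- qq x * u x)) (at x)"
proof -
  have s: "sqrt x > 0" using assms by simp
  have ss: "sqrt x * sqrt x = x" using assms by simp
  have ode: "Jdd x = - (Jd x + x * J x) / x" using J_ode[of x] assms by (simp add: field_simps)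
  have "(ud has_real_derivative
     (Jd x * (2 * sqrt x) - J x * (2 * (inverse (sqrt x) / 2))) / (2 * sqrt x * (2 * sqrt x)) + (inverse (sqrt x) / 2 * Jd x + sqrt x * Jdd x)) (at x)"
    unfolding ud_def using assms
    by (auto intro!: derivative_eq_intros J_deriv Jd_deriv)
  moreover have "(Jd x * (2 * sqrt x) - J x * (2 * (inverse (sqrt x) / 2))) / (2 * sqrt x * (2 * sqrt x)) + (inverse (sqrt x) / 2 * Jd x + sqrt x * Jdd x) = - qq x * u x"
  proof -
    define r where "r = sqrt x"
    have x: "x = r * r" using ss r_def by simp
    have r: "r > 0" using s r_def by simp
    show ?thesis unfolding ode qq_def u_def r_def[symmetric] unfolding x using r
      by (simp add: field_simps power2_eq_square)
  qed
  ultimately show ?thesis by simp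
qed


lemma eta_exists: "\<exists>\<eta>>0. \<eta> \<le> 1 \<and> (\<forall>x. \<bar>x\<bar> \<le> \<eta> \<longrightarrow> J x > 0)"
proof -
  have "isCont J 0" using J_deriv by (meson DERIV_isCont)
  then have ed: "\<forall>e>0. \<exists>d>0. \<forall>x. \<bar>x\<bar> < d \<longrightarrow> \<bar>J x - J 0\<bar> < e"
    unfolding continuous_at_eps_delta[of 0 J] by (auto simp: dist_real_def)
  then obtain d where d: "d > 0" "\<forall>x. \<bar>x\<bar> < d \<longrightarrow> \<bar>J x - J 0\<bar> < 1/2"
    using ed[rule_format, of "1/2"] by auto
  show ?thesis
  proof (rule exI[of _ "min 1 (d/2)"], intro conjI allI impI)
    fix x :: real assume "\<bar>x\<bar> \<le> min 1 (d/2)"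
    then have "\<bar>x\<bar> < d" using d by auto
    then have "\<bar>J x - 1\<bar> < 1/2" using d J0 by auto
    moreover have "1 - J x \<le> \<bar>J x - 1\<bar>" by linarith
    ultimately show "J x > 0" by linarith
  qed (use d in auto)
qed

lemma sign_const:
  fixes f :: "real \<Rightarrow> real"
  assumes "a \<le> b" "continuous_on {a..b} f" "\<forall>x\<in>{a..b}. f x \<noteq> 0"
  shows "\<forall>x\<in>{a..b}. sgn (f a) * f x > 0"
proof
  fix x assume x: "x \<in> {a..b}"
  have fa: "f a \<noteq> 0" using assms by auto
  have c: "continuous_on {a..x} (\<lambda>y. sgn (f a) * f y)"
    by (intro continuous_intros continuous_on_subset[OF assms(2)]) (use x in auto)
  show "sgn (f a) * f x > 0"
  proof (rule ccontr)
    assume "\<not> ?thesis"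
    then have "sgn (f a) * f x \<le> 0" by simp
    moreover have "0 \<le> sgn (f a) * f a" using fa by (cases "f a > 0") (auto simp: sgn_real_def)
    ultimately obtain y where "a \<le> y" "y \<le> x" "sgn (f a) * f y = 0"
      using IVT2'[of "\<lambda>y. sgn (f a) * f y" x 0 a] c x by auto
    then show False using assms x fa by (auto simp: sgn_zero_iff)
  qed
qed


lemma u_zero_iff: "x > 0 \<Longrightarrow> u x = 0 \<longleftrightarrow> J x = 0" by (simp add: u_def)

lemma nondeg:
  assumes eta: "\<eta> > 0" "\<forall>x. \<bar>x\<bar> \<le> \<eta> \<longrightarrow> J x > 0" and a: "a > 0" "J a = 0"
  shows "ud a \<noteq> 0"
proof
  assume uda: "ud a = 0"
  have ae: "a > \<eta>" using eta a by (metis abs_of_pos linorder_not_le order_less_irrefl)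
  define K where "K = 1 / (4 * \<eta>^2)"
  define G where "G x = (u x ^ 2 + ud x ^ 2) * exp (K * x)" for x
  have "G \<eta> \<le> G a"
  proof (rule DERIV_nonneg_imp_nondecreasing[of \<eta> a G])
    fix x assume x: "\<eta> \<le> x" "x \<le> a"
    then have xp: "x > 0" using eta by linarith
    have d: "(G has_real_derivative
       ((2 * u x * ud x + 2 * ud x * (- qq x * u x)) * exp (K * x) + (u x ^ 2 + ud x ^ 2) * (exp (K * x) * K))) (at x)"
      unfolding G_def using xp
      by (auto intro!: derivative_eq_intros u_deriv ud_deriv)
    have Kx: "K \<ge> 1 / (4 * x^2)" unfolding K_def using x eta
      by (intro divide_left_mono mult_left_mono power_mono) auto
    have E: "2 * u x * ud x + 2 * ud x * (- qq x * u x) + (u x ^ 2 + ud x ^ 2) * K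
       = (u x - ud x)^2 / (4 * x^2) + (u x ^ 2 + ud x ^ 2) * (K - 1 / (4 * x^2))"
      unfolding qq_def using xp by (simp add: field_simps power2_eq_square)
    have "(u x - ud x)^2 / (4 * x^2) + (u x ^ 2 + ud x ^ 2) * (K - 1 / (4 * x^2)) \<ge> 0" using Kx by (intro add_nonneg_nonneg mult_nonneg_nonneg) auto
    then have "(2 * u x * ud x + 2 * ud x * (- qq x * u x) + (u x ^ 2 + ud x ^ 2) * K) * exp (K * x) \<ge> 0"
      unfolding E by simp
    then have "((2 * u x * ud x + 2 * ud x * (- qq x * u x)) * exp (K * x) + (u x ^ 2 + ud x ^ 2) * (exp (K * x) * K)) \<ge> 0"
      by (simp add: algebra_simps)
    with d show "\<exists>y. (G has_real_derivative y) (at x) \<and> y \<ge> 0" by blast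
  qed (use ae in auto)
  moreover have "G a = 0" unfolding G_def using uda a by (simp add: u_def)
  moreover have "G \<eta> > 0"
  proof -
    have "J \<eta> > 0" using eta(2)[rule_format, of \<eta>] eta(1) by simp
    then have "u \<eta> \<noteq> 0" using eta(1) by (simp add: u_def)
    then show ?thesis unfolding G_def by (intro mult_pos_pos) (auto simp: add_pos_nonneg)
  qed
  ultimately show False by simp
qed

lemma u_cont: "0 < a \<Longrightarrow> continuous_on {a..b} u"
  by (rule continuous_at_imp_continuous_on) (meson DERIV_isCont atLeastAtMost_iff less_le_trans u_deriv)

lemma upper_zero:
  assumes a: "a > 0" shows "\<exists>x\<in>{a..a+pi}. J x = 0"
proof (rule ccontr)
  assume "\<not> ?thesis"
  then have nz: "\<forall>x\<in>{a..a+pi}. u x \<noteq> 0" using a by (auto simp: u_def)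
  define \<sigma> where "\<sigma> = sgn (u a)"
  have pos: "\<forall>x\<in>{a..a+pi}. \<sigma> * u x > 0"
    unfolding \<sigma>_def using sign_const[OF _ u_cont[OF a] nz] by simp
  define W where "W x = \<sigma> * (ud x * sin (x - a) - u x * cos (x - a))" for x
  define W' where "W' x = \<sigma> * u x * sin (x - a) * (1 - qq x)" for x
  have "\<exists>z. a < z \<and> z < a + pi \<and> W (a + pi) - W a = (a + pi - a) * W' z"
  proof (rule MVT2)
    fix x assume x: "a \<le> x" "x \<le> a + pi"
    then have xp: "x > 0" using a by linarith
    have "(W has_real_derivative \<sigma> * ((- qq x * u x) * sin (x - a) + ud x * cos (x - a) - (ud x * cos (x - a) + u x * (- sin (x - a))))) (at x)"
      unfolding W_def using xp by (auto intro!: derivative_eq_intros u_deriv ud_deriv)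
    then show "(W has_real_derivative W' x) (at x)" unfolding W'_def by (simp add: algebra_simps)
  qed (use pi_gt_zero in auto)
  then obtain z where z: "a < z" "z < a + pi" "W (a + pi) - W a = pi * W' z" by auto
  have "sin (z - a) > 0" using z by (intro sin_gt_zero) auto
  moreover have "\<sigma> * u z > 0" using pos z by auto
  moreover have "1 - qq z < 0" unfolding qq_def using z a by auto
  ultimately have "W' z < 0" unfolding W'_def by (simp add: mult_pos_neg)
  moreover have "W a < 0" using pos a unfolding W_def by auto
  moreover have "W (a + pi) > 0" using pos a unfolding W_def by auto
  ultimately show False using z(3) pi_gt_zero by (smt (verit) mult_pos_neg)
qed

lemma closed_zeros: "closed {x. c \<le> x \<and> J x = 0}"
proof -
  have "{x. c \<le> x \<and> J x = 0} = {c..} \<inter> {x. J x = (\<lambda>_. 0) x}" by auto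
  moreover have "closed {x. J x = (\<lambda>_. 0) x}" by (rule closed_Collect_eq) (auto simp: J_cont)
  ultimately show ?thesis by (simp add: closed_Int)
qed

lemma lower_gap:
  assumes eta: "\<eta> > 0" "\<forall>x. \<bar>x\<bar> \<le> \<eta> \<longrightarrow> J x > 0"
    and a: "a > 0" "J a = 0" and b: "b > a" "J b = 0"
  shows "b - a \<ge> pi / sqrt (2 + 1 / (4 * \<eta>^2))"
proof -
  define \<omega> where "\<omega> = sqrt (2 + 1 / (4 * \<eta>^2))"
  have \<omega>: "\<omega> > 0" "\<omega>^2 = 2 + 1 / (4 * \<eta>^2)" unfolding \<omega>_def by (auto simp: add_pos_nonneg)
  have ae: "a > \<eta>" using eta a by (metis abs_of_pos linorder_not_le order_less_irrefl)
  have ua: "u a = 0" using a by (simp add: u_def)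
  have uda: "ud a \<noteq> 0" using nondeg[OF eta a] .
  define \<sigma> where "\<sigma> = sgn (ud a)"
  have \<sigma>: "\<sigma> = 1 \<or> \<sigma> = -1" using uda unfolding \<sigma>_def by (auto simp: sgn_real_def)
  have \<sigma>ud: "\<sigma> * ud a > 0" using uda unfolding \<sigma>_def by (cases "ud a > 0") (auto simp: sgn_real_def)
  have dsu: "((\<lambda>x. \<sigma> * u x) has_real_derivative \<sigma> * ud x) (at x)" if "x > 0" for x
    using u_deriv[OF that] by (auto intro!: derivative_eq_intros)
  obtain d where d: "d > 0" "\<forall>h>0. h < d \<longrightarrow> \<sigma> * u a < \<sigma> * u (a + h)"
    using DERIV_pos_inc_right[OF dsu[OF a(1)] \<sigma>ud] by auto
  have near: "\<sigma> * u x > 0" if "a < x" "x < a + d" for x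
    using d(2)[rule_format, of "x - a"] that ua by auto
  define Z where "Z = {x. a + d \<le> x \<and> J x = 0}"
  have Zsub: "x \<in> Z" if "a < x" "J x = 0" for x
  proof -
    have "\<not> (x < a + d)" using near[of x] that a by (auto simp: u_def)
    then show ?thesis using that unfolding Z_def by auto
  qed
  have bZ: "b \<in> Z" using Zsub b by auto
  have bddZ: "bdd_below Z" unfolding Z_def by (auto intro: bdd_belowI[of _ "a + d"])
  define b0 where "b0 = Inf Z"
  have b0Z: "b0 \<in> Z" unfolding b0_def using closed_contains_Inf[of Z] bZ bddZ closed_zeros Z_def by auto
  have b0b: "b0 \<le> b" unfolding b0_def using cInf_lower[OF bZ bddZ] .
  have b0ad: "b0 \<ge> a + d" using b0Z Z_def by auto
  have Jb0: "J b0 = 0" using b0Z Z_def by auto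
  have ub0: "u b0 = 0" using Jb0 by (simp add: u_def)
  have nozero: "J x \<noteq> 0" if "a < x" "x < b0" for x
  proof
    assume "J x = 0"
    then have "x \<in> Z" using Zsub that by auto
    then have "b0 \<le> x" unfolding b0_def using cInf_lower[OF _ bddZ] by auto
    then show False using that by auto
  qed
  have inside: "\<sigma> * u x > 0" if x: "a < x" "x < b0" for x
  proof (cases "x < a + d")
    case True then show ?thesis using near x by auto
  next
    case False
    define c where "c = a + d / 2"
    have c: "a < c" "c < a + d" "c \<le> x" using d False unfolding c_def by auto
    have uc: "\<sigma> * u c > 0" using near c by auto
    have nz: "\<forall>y\<in>{c..x}. u y \<noteq> 0" using nozero c x a by (auto simp: u_def)
    have "sgn (u c) * u x > 0" using sign_const[OF c(3) u_cont nz] c a by auto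
    moreover have "sgn (u c) = \<sigma>" using \<sigma> uc by (auto simp: sgn_real_def)
    ultimately show ?thesis by simp
  qed
  have udb0: "\<sigma> * ud b0 \<le> 0"
  proof (rule ccontr)
    assume "\<not> ?thesis"
    then have "\<sigma> * ud b0 > 0" by simp
    from DERIV_pos_inc_left[OF dsu this] obtain e where e: "e > 0" "\<forall>h>0. h < e \<longrightarrow> \<sigma> * u (b0 - h) < \<sigma> * u b0"
      using b0ad d a by auto
    define h where "h = min e (b0 - a) / 2"
    have h: "h > 0" "h < e" "h < b0 - a" using e b0ad d unfolding h_def by auto
    have "\<sigma> * u (b0 - h) < 0" using e(2)[rule_format, OF h(1) h(2)] ub0 by simp
    moreover have "\<sigma> * u (b0 - h) > 0" using inside[of "b0 - h"] h by auto
    ultimately show False by simp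
  qed
  show ?thesis
  proof (rule ccontr)
    assume "\<not> ?thesis"
    then have lt: "b0 - a < pi / \<omega>" using b0b unfolding \<omega>_def by auto
    then have lt': "\<omega> * (b0 - a) < pi" using \<omega> by (simp add: field_simps)
    define W where "W x = \<sigma> * (ud x * sin (\<omega> * (x - a)) - u x * (\<omega> * cos (\<omega> * (x - a))))" for x
    define W' where "W' x = \<sigma> * u x * sin (\<omega> * (x - a)) * (\<omega>^2 - qq x)" for x
    have "\<exists>z. a < z \<and> z < b0 \<and> W b0 - W a = (b0 - a) * W' z"
    proof (rule MVT2)
      fix x assume x: "a \<le> x" "x \<le> b0"
      then have xp: "x > 0" using a by linarith
      have "(W has_real_derivative \<sigma> * ((- qq x * u x) * sin (\<omega> * (x - a)) + ud x * (cos (\<omega> * (x - a)) * \<omega>)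
            - (ud x * (\<omega> * cos (\<omega> * (x - a))) + u x * (\<omega> * (- sin (\<omega> * (x - a)) * \<omega>))))) (at x)"
        unfolding W_def using xp by (auto intro!: derivative_eq_intros u_deriv ud_deriv)
      then show "(W has_real_derivative W' x) (at x)" unfolding W'_def by (simp add: algebra_simps power2_eq_square)
    qed (use b0ad d in auto)
    then obtain z where z: "a < z" "z < b0" "W b0 - W a = (b0 - a) * W' z" by auto
    have zl: "\<omega> * (z - a) < \<omega> * (b0 - a)" using z \<omega> by simp
    have zpi: "\<omega> * (z - a) < pi" using zl lt' by linarith
    have "\<omega> * (z - a) > 0" using z \<omega> by simp
    then have "sin (\<omega> * (z - a)) > 0" using zpi by (intro sin_gt_zero)
    moreover have "\<sigma> * u z > 0" using inside z by auto
    moreover have "\<omega>^2 - qq z > 0"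
    proof -
      have "1 / (4 * z^2) \<le> 1 / (4 * \<eta>^2)" using z ae eta by (intro divide_left_mono mult_left_mono power_mono) auto
      then show ?thesis unfolding qq_def \<omega> by simp
    qed
    ultimately have "W' z > 0" unfolding W'_def by simp
    moreover have "b0 - a > 0" using z by simp
    ultimately have "(b0 - a) * W' z > 0" by simp
    then have "W b0 > W a" using z(3) by simp
    moreover have "W a = 0" unfolding W_def using ua by simp
    moreover have "W b0 \<le> 0"
    proof -
      have "sin (\<omega> * (b0 - a)) \<ge> 0" using lt' \<omega> b0ad d by (intro sin_ge_zero) auto
      then have "(\<sigma> * ud b0) * sin (\<omega> * (b0 - a)) \<le> 0" using udb0 by (simp add: mult_nonpos_nonneg)
      then show ?thesis unfolding W_def using ub0 by (simp add: mult.assoc)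
    qed
    ultimately show False by simp
  qed
qed

lemma zeros_Inf:
  assumes "\<forall>x. c < x \<and> J x = 0 \<longrightarrow> e \<le> x" "c < e" "\<exists>x. c < x \<and> J x = 0"
  shows "Inf {x. c < x \<and> J x = 0} \<ge> e \<and> J (Inf {x. c < x \<and> J x = 0}) = 0"
proof -
  have eq: "{x. c < x \<and> J x = 0} = {x. e \<le> x \<and> J x = 0}" using assms by force
  have ne: "{x. e \<le> x \<and> J x = 0} \<noteq> {}" using assms eq by auto
  have bdd: "bdd_below {x. e \<le> x \<and> J x = 0}" by (auto intro: bdd_belowI[of _ e])
  have "Inf {x. e \<le> x \<and> J x = 0} \<in> {x. e \<le> x \<and> J x = 0}"
    using closed_contains_Inf[OF ne bdd closed_zeros] .
  then show ?thesis unfolding eq by auto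
qed


lemma bessel_zero_growth: "\<exists>c>0. \<forall>n\<ge>1. bessel_zero n \<ge> c * real n"
proof -
  obtain \<eta> where eta: "\<eta> > 0" "\<eta> \<le> 1" "\<forall>x. \<bar>x\<bar> \<le> \<eta> \<longrightarrow> J x > 0" using eta_exists by auto
  define \<delta> where "\<delta> = pi / sqrt (2 + 1 / (4 * \<eta>^2))"
  have \<delta>: "\<delta> > 0" unfolding \<delta>_def by (auto simp: add_pos_nonneg)
  have BJ: "bessel_J0 = J" using bessel_J by auto
  have main: "J (bessel_zero (Suc m)) = 0 \<and> bessel_zero (Suc m) \<ge> \<eta> + real m * \<delta>" for m
  proof (induction m)
    case 0
    have pz: "\<forall>x. 0 < x \<and> J x = 0 \<longrightarrow> \<eta> \<le> x"
    proof (intro allI impI)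
      fix x assume x: "0 < x \<and> J x = 0"
      show "\<eta> \<le> x"
      proof (rule ccontr)
        assume "\<not> \<eta> \<le> x"
        then have "\<bar>x\<bar> \<le> \<eta>" using x by auto
        then have "J x > 0" using eta(3) by blast
        then show False using x by simp
      qed
    qed
    obtain x where "x \<in> {1..1+pi}" "J x = 0" using upper_zero[of 1] by auto
    then have ex: "\<exists>x. 0 < x \<and> J x = 0" by (intro exI[of _ x]) auto
    show ?case using zeros_Inf[OF pz eta(1) ex] by (simp add: BJ)
  next
    case (Suc m)
    define a where "a = bessel_zero (Suc m)"
    have a: "J a = 0" "a \<ge> \<eta> + real m * \<delta>" using Suc a_def by auto
    have "real m * \<delta> \<ge> 0" using \<delta> by simp
    then have apos: "a > 0" using a eta by linarith
    have pz: "\<forall>x. a < x \<and> J x = 0 \<longrightarrow> a + \<delta> \<le> x"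
    proof (intro allI impI)
      fix x assume x: "a < x \<and> J x = 0"
      show "a + \<delta> \<le> x" using lower_gap[OF eta(1) eta(3) apos a(1), of x] x unfolding \<delta>_def by linarith
    qed
    obtain x where "x \<in> {a+1..a+1+pi}" "J x = 0" using upper_zero[of "a+1"] apos by auto
    then have ex: "\<exists>x. a < x \<and> J x = 0" by (intro exI[of _ x]) auto
    have "Inf {x. a < x \<and> J x = 0} \<ge> a + \<delta> \<and> J (Inf {x. a < x \<and> J x = 0}) = 0"
      using zeros_Inf[OF pz _ ex] \<delta> by auto
    moreover have eq: "bessel_zero (Suc (Suc m)) = Inf {x. a < x \<and> J x = 0}"
      unfolding a_def by (simp only: bessel_zero.simps(2) BJ)
    ultimately show ?case using a unfolding eq by (simp add: algebra_simps)
  qed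
  show ?thesis
  proof (rule exI[of _ "min \<eta> \<delta>"], intro conjI allI impI)
    fix n :: nat assume n: "n \<ge> 1"
    then obtain m where m: "n = Suc m" by (cases n) auto
    have "min \<eta> \<delta> * real n = min \<eta> \<delta> + real m * min \<eta> \<delta>" using m by (simp add: algebra_simps)
    also have "\<dots> \<le> \<eta> + real m * \<delta>" by (intro add_mono mult_left_mono) auto
    also have "\<dots> \<le> bessel_zero n" using main[of m] m by simp
    finally show "min \<eta> \<delta> * real n \<le> bessel_zero n" .
  qed (use eta \<delta> in auto)
qed


abbreviation "NG \<equiv> density lborel (normal_density 0 (sqrt (1/2)))"

lemma gauss_id:
  assumes "0 \<le> \<tau>" "\<tau> < 1"
  shows "normal_density 0 (sqrt (1/2)) x * exp (\<tau> * x^2) = (1 / sqrt (1 - \<tau>)) * normal_density 0 (sqrt (1 / (2 * (1 - \<tau>)))) x"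
proof -
  have p: "1 - \<tau> > 0" using assms by simp
  have h1: "normal_density 0 (sqrt (1/2)) x = 1 / sqrt pi * exp (-(x^2))"
    by (simp add: normal_density_def)
  have h2: "normal_density 0 (sqrt (1 / (2 * (1 - \<tau>)))) x = sqrt (1 - \<tau>) / sqrt pi * exp (- ((1 - \<tau>) * x^2))"
  proof -
    define v where "v = 1 / (2 * (1 - \<tau>))"
    have v: "v > 0" using p v_def by simp
    have s2: "(sqrt v)^2 = v" using v by simp
    have a1: "2 * pi * (sqrt v)^2 = pi / (1 - \<tau>)" unfolding s2 v_def using p by (simp add: field_simps)
    have a2: "-(x - 0)\<^sup>2 / (2 * (sqrt v)\<^sup>2) = - ((1 - \<tau>) * x\<^sup>2)" unfolding s2 v_def using p by (simp add: field_simps)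
    have a3: "1 / sqrt (pi / (1 - \<tau>)) = sqrt (1 - \<tau>) / sqrt pi" by (simp add: real_sqrt_divide)
    show ?thesis unfolding v_def[symmetric] normal_density_def a1 a2 a3 ..
  qed
  have e: "exp (-(x^2)) * exp (\<tau> * x^2) = exp (- ((1 - \<tau>) * x^2))"
    by (simp add: exp_add[symmetric] algebra_simps)
  have sp: "sqrt (1 - \<tau>) > 0" using p by simp
  show ?thesis unfolding h1 h2 using sp e
    by (simp add: field_simps)
qed

lemma gauss_mgf1:
  assumes "0 \<le> \<tau>" "\<tau> < 1"
  shows "(\<integral>\<^sup>+ x. ennreal (exp (\<tau> * x^2)) \<partial>NG) = ennreal (1 / sqrt (1 - \<tau>))"
proof -
  have "(\<integral>\<^sup>+ x. ennreal (exp (\<tau> * x^2)) \<partial>NG) = (\<integral>\<^sup>+ x. ennreal (normal_density 0 (sqrt (1/2)) x) * ennreal (exp (\<tau> * x^2)) \<partial>lborel)"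
    by (subst nn_integral_density) auto
  also have "\<dots> = (\<integral>\<^sup>+ x. ennreal (1 / sqrt (1 - \<tau>)) * ennreal (normal_density 0 (sqrt (1 / (2 * (1 - \<tau>)))) x) \<partial>lborel)"
  proof (intro nn_integral_cong)
    fix x :: real
    have "ennreal (normal_density 0 (sqrt (1/2)) x) * ennreal (exp (\<tau> * x^2)) = ennreal (normal_density 0 (sqrt (1/2)) x * exp (\<tau> * x^2))"
      by (rule ennreal_mult'[symmetric]) simp
    also have "\<dots> = ennreal ((1 / sqrt (1 - \<tau>)) * normal_density 0 (sqrt (1 / (2 * (1 - \<tau>)))) x)"
      by (simp only: gauss_id[OF assms])
    also have "\<dots> = ennreal (1 / sqrt (1 - \<tau>)) * ennreal (normal_density 0 (sqrt (1 / (2 * (1 - \<tau>)))) x)"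
      by (rule ennreal_mult') (use assms in simp)
    finally show "ennreal (normal_density 0 (sqrt (1/2)) x) * ennreal (exp (\<tau> * x^2)) = ennreal (1 / sqrt (1 - \<tau>)) * ennreal (normal_density 0 (sqrt (1 / (2 * (1 - \<tau>)))) x)" .
  qed
  also have "\<dots> = ennreal (1 / sqrt (1 - \<tau>)) * (\<integral>\<^sup>+ x. ennreal (normal_density 0 (sqrt (1 / (2 * (1 - \<tau>)))) x) \<partial>lborel)"
    by (subst nn_integral_cmult) auto
  also have "(\<integral>\<^sup>+ x. ennreal (normal_density 0 (sqrt (1 / (2 * (1 - \<tau>)))) x) \<partial>lborel) = 1"
  proof -
    have "(\<integral>\<^sup>+ x. ennreal (normal_density 0 \<sigma> x) \<partial>lborel) = 1" if "\<sigma> > 0" for \<sigma>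
      by (subst nn_integral_eq_integral) (auto simp: that)
    moreover have "sqrt (1 / (2 * (1 - \<tau>))) > 0" using assms by simp
    ultimately show ?thesis by blast
  qed
  finally show ?thesis by simp
qed

lemma meas_Complex: "(\<lambda>(x, y). Complex x y) \<in> borel_measurable (NG \<Otimes>\<^sub>M NG)"
proof -
  have "(\<lambda>(x, y). Complex x y) = (\<lambda>p. complex_of_real (fst p) + \<i> * complex_of_real (snd p))"
    by (auto simp: complex_eq_iff)
  then show ?thesis by simp
qed

lemma gauss_mgf:
  assumes "0 \<le> \<tau>" "\<tau> < 1"
  shows "(\<integral>\<^sup>+ z. ennreal (exp (\<tau> * (cmod z)^2)) \<partial>complex_gaussian) = ennreal (1 / (1 - \<tau>))"
proof -
  interpret N: prob_space NG by (rule prob_space_normal_density) simp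
  interpret N: sigma_finite_measure NG by (rule N.sigma_finite_measure_axioms)
  have "(\<integral>\<^sup>+ z. ennreal (exp (\<tau> * (cmod z)^2)) \<partial>complex_gaussian)
      = (\<integral>\<^sup>+ p. ennreal (exp (\<tau> * (cmod ((\<lambda>(x, y). Complex x y) p))^2)) \<partial>(NG \<Otimes>\<^sub>M NG))"
    unfolding complex_gaussian_def by (subst nn_integral_distr[OF meas_Complex]) auto
  also have "\<dots> = (\<integral>\<^sup>+ p. ennreal (exp (\<tau> * (fst p)^2)) * ennreal (exp (\<tau> * (snd p)^2)) \<partial>(NG \<Otimes>\<^sub>M NG))"
    by (intro nn_integral_cong) (auto simp: cmod_def ennreal_mult'[symmetric] exp_add[symmetric] algebra_simps)
  also have "\<dots> = (\<integral>\<^sup>+ x. \<integral>\<^sup>+ y. ennreal (exp (\<tau> * x^2)) * ennreal (exp (\<tau> * y^2)) \<partial>NG \<partial>NG)"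
    by (subst N.nn_integral_fst[symmetric]) auto
  also have "\<dots> = (\<integral>\<^sup>+ x. ennreal (exp (\<tau> * x^2)) * ennreal (1 / sqrt (1 - \<tau>)) \<partial>NG)"
    by (intro nn_integral_cong) (simp add: nn_integral_cmult gauss_mgf1[OF assms])
  also have "\<dots> = ennreal (1 / sqrt (1 - \<tau>)) * ennreal (1 / sqrt (1 - \<tau>))"
    by (subst nn_integral_multc) (auto simp: gauss_mgf1[OF assms])
  also have "\<dots> = ennreal (1 / (1 - \<tau>))"
    using assms by (simp add: ennreal_mult'[symmetric] real_sqrt_mult[symmetric] flip: real_sqrt_mult)
  finally show ?thesis .
qed


lemma tele:
  fixes p :: real and n :: nat
  assumes p: "p > 1" and n: "n \<ge> 2"
  shows "real n powr (-p) \<le> (real (n - 1) powr (1 - p) - real n powr (1 - p)) / (p - 1)"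
proof -
  have n1: "real (n - 1) > 0" "real (n - 1) < real n" using n by auto
  have "\<exists>z. real (n - 1) < z \<and> z < real n \<and> (real n powr (1 - p) - real (n - 1) powr (1 - p) = (real n - real (n - 1)) * ((1 - p) * z powr (1 - p - 1)))"
  proof (rule MVT2[OF n1(2)])
    fix x assume "real (n - 1) \<le> x" "x \<le> real n"
    then have "x > 0" using n1 by linarith
    then show "((\<lambda>x. x powr (1 - p)) has_real_derivative (1 - p) * x powr (1 - p - 1)) (at x)"
      by (rule has_real_derivative_powr)
  qed
  then obtain z where z: "real (n - 1) < z" "z < real n"
    "real n powr (1 - p) - real (n - 1) powr (1 - p) = (real n - real (n - 1)) * ((1 - p) * z powr (1 - p - 1))" by blast
  have d: "real n - real (n - 1) = 1" using n by (simp add: of_nat_diff)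
  have A: "real n powr (-p) \<le> z powr (-p)" using z n1 p by (intro powr_mono2') auto
  have e: "1 - p - 1 = -p" by simp
  have B: "real (n - 1) powr (1 - p) - real n powr (1 - p) = (p - 1) * z powr (-p)"
    using z(3) unfolding d e by (simp add: algebra_simps)
  have "(p - 1) * real n powr (-p) \<le> (p - 1) * z powr (-p)" using A p by (intro mult_left_mono) auto
  then have "(p - 1) * real n powr (-p) \<le> real (n - 1) powr (1 - p) - real n powr (1 - p)" using B by simp
  then show ?thesis using p by (simp add: pos_le_divide_eq mult.commute)
qed

lemma telealg: "(b - c) / d + (a - b) / d = (a - c) / (d::real)"
  by (cases "d = 0") (simp_all add: field_simps)

lemma tail_sum:
  fixes p :: real and N0 :: nat
  assumes p: "p > 1" and N0: "N0 \<ge> 2"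
  shows "(\<Sum>n\<in>{1..M}. if N0 \<le> n then real n powr (-p) else 0) \<le> real (N0 - 1) powr (1 - p) / (p - 1)"
proof -
  have gen: "(\<Sum>n\<in>{1..M}. if N0 \<le> n then real n powr (-p) else 0)
      \<le> (real (N0 - 1) powr (1 - p) - real (max M (N0 - 1)) powr (1 - p)) / (p - 1)" for M
  proof (induction M)
    case 0
    then show ?case by simp
  next
    case (Suc M)
    have split: "{1..Suc M} = insert (Suc M) {1..M}" by auto
    show ?case
    proof (cases "N0 \<le> Suc M")
      case True
      then have m1: "max M (N0 - 1) = M" "max (Suc M) (N0 - 1) = Suc M" by auto
      have t: "real (Suc M) powr (-p) \<le> (real M powr (1 - p) - real (Suc M) powr (1 - p)) / (p - 1)"
        using tele[OF p, of "Suc M"] True N0 by simp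
      have "(\<Sum>n\<in>{1..Suc M}. if N0 \<le> n then real n powr (-p) else 0)
          = real (Suc M) powr (-p) + (\<Sum>n\<in>{1..M}. if N0 \<le> n then real n powr (-p) else 0)"
        unfolding split using True by simp
      also have "\<dots> \<le> (real M powr (1 - p) - real (Suc M) powr (1 - p)) / (p - 1)
            + (real (N0 - 1) powr (1 - p) - real M powr (1 - p)) / (p - 1)"
        using Suc.IH m1 t by simp
      also have "\<dots> = (real (N0 - 1) powr (1 - p) - real (max (Suc M) (N0 - 1)) powr (1 - p)) / (p - 1)"
        unfolding m1 by (rule telealg)
      finally show ?thesis .
    next
      case False
      then have m1: "max M (N0 - 1) = N0 - 1" "max (Suc M) (N0 - 1) = N0 - 1" by auto
      have "(\<Sum>n\<in>{1..Suc M}. if N0 \<le> n then real n powr (-p) else 0)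
          = (\<Sum>n\<in>{1..M}. if N0 \<le> n then real n powr (-p) else 0)"
        unfolding split using False by simp
      then show ?thesis using Suc.IH unfolding m1 by simp
    qed
  qed
  have "real (max M (N0 - 1)) powr (1 - p) / (p - 1) \<ge> 0" using p by simp
  moreover have "(real (N0 - 1) powr (1 - p) - real (max M (N0 - 1)) powr (1 - p)) / (p - 1)
     = real (N0 - 1) powr (1 - p) / (p - 1) - real (max M (N0 - 1)) powr (1 - p) / (p - 1)"
    by (rule diff_divide_distrib)
  ultimately show ?thesis using gen[of M] by linarith
qed


lemma ratio_bound:
  fixes s :: real and N0 :: nat
  assumes s: "s < 1/2" and N0: "N0 \<ge> 2"
  shows "real N0 powr (1 - 2 * s) * real (N0 - 1) powr (2 * s - 1) \<le> 2 powr (1 - 2 * s)"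
proof -
  have h: "real N0 / 2 \<le> real (N0 - 1)" "real N0 / 2 > 0" using N0 by (auto simp: of_nat_diff)
  have "real (N0 - 1) powr (2 * s - 1) \<le> (real N0 / 2) powr (2 * s - 1)"
    using h s by (intro powr_mono2') auto
  also have "\<dots> = real N0 powr (2 * s - 1) / 2 powr (2 * s - 1)" by (rule powr_divide)
  finally have "real N0 powr (1 - 2 * s) * real (N0 - 1) powr (2 * s - 1) \<le> real N0 powr (1 - 2 * s) * (real N0 powr (2 * s - 1) / 2 powr (2 * s - 1))"
    by (intro mult_left_mono) auto
  also have "\<dots> = (real N0 powr (1 - 2 * s) * real N0 powr (2 * s - 1)) / 2 powr (2 * s - 1)" by simp
  also have "real N0 powr (1 - 2 * s) * real N0 powr (2 * s - 1) = 1"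
    using N0 by (simp add: powr_add[symmetric])
  also have "1 / 2 powr (2 * s - 1) = 2 powr (1 - 2 * s)"
    by (simp add: powr_minus_divide[symmetric])
  finally show ?thesis .
qed

lemma weights:
  fixes zz :: "nat \<Rightarrow> real" and a0 s :: real and N0 :: nat
  assumes a0: "a0 > 0" "\<forall>n\<ge>1. zz n \<ge> a0 * real n" and s: "s < 1/2" and N0: "N0 \<ge> 2"
  defines "v \<equiv> \<lambda>n. (if N0 \<le> n then zz n powr (2 * s - 2) else 0) * real N0 powr (1 - 2 * s)"
  shows "(\<forall>n. 0 \<le> v n) \<and> (\<forall>n. v n \<le> a0 powr (2 * s - 2))
       \<and> (\<forall>M. (\<Sum>n\<in>{1..M}. v n) \<le> a0 powr (2 * s - 2) * 2 powr (1 - 2 * s) / (1 - 2 * s))"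
proof (intro conjI allI)
  fix n show "0 \<le> v n" unfolding v_def by simp
next
  have zb: "zz n powr (2 * s - 2) \<le> a0 powr (2 * s - 2) * real n powr (2 * s - 2)" if "N0 \<le> n" for n
  proof -
    have pos: "a0 * real n > 0" using that N0 a0 by simp
    have "zz n powr (2 * s - 2) \<le> (a0 * real n) powr (2 * s - 2)"
      using pos a0 that N0 s by (intro powr_mono2') auto
    also have "\<dots> = a0 powr (2 * s - 2) * real n powr (2 * s - 2)" using a0 by (simp add: powr_mult)
    finally show ?thesis .
  qed
  {
    fix n
    show "v n \<le> a0 powr (2 * s - 2)"
    proof (cases "N0 \<le> n")
      case False then show ?thesis unfolding v_def by simp
    next
      case True
      have "real n powr (2 * s - 2) \<le> real N0 powr (2 * s - 2)" using True N0 s by (intro powr_mono2') auto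
      then have "a0 powr (2 * s - 2) * real n powr (2 * s - 2) \<le> a0 powr (2 * s - 2) * real N0 powr (2 * s - 2)"
        by (rule mult_left_mono) simp
      then have "zz n powr (2 * s - 2) \<le> a0 powr (2 * s - 2) * real N0 powr (2 * s - 2)"
        using zb[OF True] by linarith
      then have "zz n powr (2 * s - 2) * real N0 powr (1 - 2 * s) \<le> a0 powr (2 * s - 2) * real N0 powr (2 * s - 2) * real N0 powr (1 - 2 * s)"
        by (rule mult_right_mono) simp
      then have "v n \<le> a0 powr (2 * s - 2) * real N0 powr (2 * s - 2) * real N0 powr (1 - 2 * s)"
        unfolding v_def using True by simp
      also have "\<dots> = a0 powr (2 * s - 2) * real N0 powr (-1)"
        using N0 by (simp add: mult.assoc powr_add[symmetric])
      also have "\<dots> \<le> a0 powr (2 * s - 2) * 1"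
        using N0 by (intro mult_left_mono) (auto simp: powr_minus_divide)
      finally show ?thesis by simp
    qed
  }
  fix M
  have "(\<Sum>n\<in>{1..M}. v n) = real N0 powr (1 - 2 * s) * (\<Sum>n\<in>{1..M}. if N0 \<le> n then zz n powr (2 * s - 2) else 0)"
    unfolding v_def by (simp add: sum_distrib_left mult.commute)
  also have "\<dots> \<le> real N0 powr (1 - 2 * s) * (a0 powr (2 * s - 2) * (\<Sum>n\<in>{1..M}. if N0 \<le> n then real n powr (2 * s - 2) else 0))"
    unfolding sum_distrib_left
    by (intro mult_left_mono sum_mono) (auto simp: zb)
  also have "(\<Sum>n\<in>{1..M}. if N0 \<le> n then real n powr (2 * s - 2) else 0) \<le> real (N0 - 1) powr (2 * s - 1) / (1 - 2 * s)"
  proof -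
    have eqp: "-(2 - 2 * s) = 2 * s - 2" "1 - (2 - 2 * s) = 2 * s - 1" "2 - 2 * s - 1 = 1 - 2 * s" by simp_all
    have "1 < 2 - 2 * s" using s by simp
    from tail_sum[OF this N0, of M] show ?thesis unfolding eqp .
  qed
  then have "real N0 powr (1 - 2 * s) * (a0 powr (2 * s - 2) * (\<Sum>n\<in>{1..M}. if N0 \<le> n then real n powr (2 * s - 2) else 0))
      \<le> real N0 powr (1 - 2 * s) * (a0 powr (2 * s - 2) * (real (N0 - 1) powr (2 * s - 1) / (1 - 2 * s)))"
    by (intro mult_left_mono) auto
  also have "\<dots> = a0 powr (2 * s - 2) * (real N0 powr (1 - 2 * s) * real (N0 - 1) powr (2 * s - 1)) / (1 - 2 * s)"
    by simp
  also have "\<dots> \<le> a0 powr (2 * s - 2) * 2 powr (1 - 2 * s) / (1 - 2 * s)"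
    using ratio_bound[OF s N0] s by (intro divide_right_mono mult_left_mono) auto
  finally show "(\<Sum>n\<in>{1..M}. v n) \<le> a0 powr (2 * s - 2) * 2 powr (1 - 2 * s) / (1 - 2 * s)" .
qed


lemma key_sum_event:
  fixes s lam :: real and N0 :: nat and zz :: "nat \<Rightarrow> real" and gw :: "nat \<Rightarrow> complex"
  assumes zpos: "\<forall>n\<ge>1. zz n > 0" and lam: "lam > 0" and N0: "N0 \<ge> 1"
    and ev: "ereal (real N0 powr (1/2 - s)) *
                   Hs_norm s (\<lambda>n. if n \<ge> N0 then gw n / complex_of_real (zz n) else 0) > ereal lam"
    and zz: "zz = bessel_zero"
  shows "\<exists>M. lam^2 < (\<Sum>n\<in>{1..M}. (if N0 \<le> n then zz n powr (2 * s - 2) else 0) * real N0 powr (1 - 2 * s) * (cmod (gw n))^2)"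
proof -
  define a where "a = (\<lambda>n. if n \<ge> N0 then gw n / complex_of_real (zz n) else 0)"
  define T where "T m = bessel_zero (Suc m) powr (2 * s) * (cmod (a (Suc m)))\<^sup>2" for m
  define c where "c = real N0 powr (1 - 2 * s)"
  have cpos: "c > 0" unfolding c_def using N0 by simp
  have Tnn: "T m \<ge> 0" for m unfolding T_def by simp
  have Teq: "c * T m = (if N0 \<le> Suc m then zz (Suc m) powr (2 * s - 2) else 0) * c * (cmod (gw (Suc m)))^2" for m
  proof (cases "N0 \<le> Suc m")
    case True
    have zp: "zz (Suc m) > 0" using zpos by simp
    have "cmod (a (Suc m)) = cmod (gw (Suc m)) / zz (Suc m)"
      unfolding a_def using True zp by (simp add: norm_divide)
    then have "T m = (cmod (gw (Suc m)))^2 * (zz (Suc m) powr (2 * s) / zz (Suc m) ^ 2)"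
      unfolding T_def zz[symmetric] by (simp add: power_divide)
    also have "zz (Suc m) powr (2 * s) / zz (Suc m) ^ 2 = zz (Suc m) powr (2 * s - 2)"
    proof -
      have "zz (Suc m) ^ 2 = zz (Suc m) powr (real 2)" using zp by (rule powr_realpow[symmetric])
      then have "zz (Suc m) ^ 2 = zz (Suc m) powr 2" by simp
      moreover have "zz (Suc m) powr (2 * s - 2) = zz (Suc m) powr (2 * s) / zz (Suc m) powr 2"
        by (rule powr_diff)
      ultimately show ?thesis by simp
    qed
    finally show ?thesis using True by simp
  next
    case False then show ?thesis unfolding T_def a_def by simp
  qed
  have psum: "(\<Sum>m<M. c * T m) = (\<Sum>n\<in>{1..M}. (if N0 \<le> n then zz n powr (2 * s - 2) else 0) * real N0 powr (1 - 2 * s) * (cmod (gw n))^2)" for M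
  proof -
    have "(\<Sum>m<M. c * T m) = (\<Sum>m<M. (if N0 \<le> Suc m then zz (Suc m) powr (2 * s - 2) else 0) * c * (cmod (gw (Suc m)))^2)"
      by (rule sum.cong) (rule refl, rule Teq)
    then show ?thesis unfolding c_def by (simp only: sum.atLeast1_atMost_eq One_nat_def)
  qed
  have Hs: "Hs_norm s a = (if summable T then ereal (sqrt (suminf T)) else \<infinity>)"
    unfolding Hs_norm_def T_def by simp
  show ?thesis
  proof (cases "summable T")
    case False
    then have ns: "\<not> summable (\<lambda>m. c * T m)" using cpos by (simp add: summable_cmult_iff)
    show ?thesis
    proof (rule ccontr)
      assume "\<not> ?thesis"
      then have "\<forall>M. (\<Sum>m<M. c * T m) \<le> lam^2" unfolding psum by (simp add: not_less)
      then have "summable (\<lambda>m. c * T m)" using Tnn cpos by (intro summableI_nonneg_bounded) auto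
      with ns show False by simp
    qed
  next
    case True
    have "ereal (real N0 powr (1/2 - s)) * ereal (sqrt (suminf T)) > ereal lam"
      using ev Hs True unfolding a_def by simp
    then have lt: "lam < real N0 powr (1/2 - s) * sqrt (suminf T)" by simp
    have "lam^2 < (real N0 powr (1/2 - s) * sqrt (suminf T))^2"
      using lt lam by (intro power_strict_mono) auto
    also have "\<dots> = c * suminf T"
    proof -
      have "(real N0 powr (1/2 - s))^2 = c" unfolding c_def
        by (simp add: power2_eq_square powr_add[symmetric])
      moreover have "(sqrt (suminf T))^2 = suminf T" using True Tnn by (simp add: suminf_nonneg)
      ultimately show ?thesis by (simp add: power_mult_distrib)
    qed
    also have "\<dots> = (\<Sum>m. c * T m)" using True by (simp add: suminf_mult)
    finally have gt: "lam^2 < (\<Sum>m. c * T m)" .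
    show ?thesis
    proof (rule ccontr)
      assume "\<not> ?thesis"
      then have "\<forall>M. (\<Sum>m<M. c * T m) \<le> lam^2" unfolding psum by (simp add: not_less)
      then have "(\<Sum>m. c * T m) \<le> lam^2" using True by (intro suminf_le_const) (auto intro: summable_mult)
      with gt show False by simp
    qed
  qed
qed


lemma recip_bound: "0 \<le> x \<Longrightarrow> x \<le> 1/2 \<Longrightarrow> 1 / (1 - x) \<le> 1 + 2 * (x::real)"
proof -
  assume x: "0 \<le> x" "x \<le> 1/2"
  have "x * (1 - 2 * x) \<ge> 0" using x by simp
  then have "1 \<le> (1 + 2 * x) * (1 - x)" by (simp add: algebra_simps power2_eq_square)
  moreover have "1 - x > 0" using x by simp
  ultimately show ?thesis by (simp add: pos_divide_le_eq)
qed

lemma mgf_bound: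
  fixes P :: "'w measure" and g :: "nat \<Rightarrow> 'w \<Rightarrow> complex" and v :: "nat \<Rightarrow> real"
  assumes P: "prob_space P"
    and ind: "prob_space.indep_vars P (\<lambda>_. borel) g {1..}"
    and dis: "\<And>n. n \<ge> 1 \<Longrightarrow> distr P borel (g n) = complex_gaussian"
    and v: "\<And>n. 0 \<le> v n" "\<And>n. t * v n \<le> 1/2" and t: "t \<ge> 0"
    and K: "(\<Sum>n\<in>{1..M}. v n) \<le> K"
  shows "emeasure P {\<omega>\<in>space P. L < (\<Sum>n\<in>{1..M}. v n * (cmod (g n \<omega>))^2)} \<le> ennreal (exp (- t * L) * exp (2 * t * K))"
proof -
  interpret P: prob_space P by (rule P)
  have gm: "g n \<in> borel_measurable P" if "n \<ge> 1" for n
    using ind that unfolding P.indep_vars_def by auto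
  define S where "S \<omega> = (\<Sum>n\<in>{1..M}. v n * (cmod (g n \<omega>))^2)" for \<omega>
  define X where "X n \<omega> = ennreal (exp (t * v n * (cmod (g n \<omega>))^2))" for n \<omega>
  have Sm: "S \<in> borel_measurable P" unfolding S_def
    by (intro borel_measurable_sum) (auto intro!: borel_measurable_times borel_measurable_power measurable_compose[OF gm borel_measurable_norm])
  have indX: "P.indep_vars (\<lambda>_. borel) X {1..M}"
  proof -
    have "P.indep_vars (\<lambda>_. borel) g {1..M}" by (rule P.indep_vars_subset[OF ind]) auto
    then have "P.indep_vars (\<lambda>_. borel) (\<lambda>n \<omega>. (\<lambda>z. ennreal (exp (t * v n * (cmod z)^2))) (g n \<omega>)) {1..M}"
      by (rule P.indep_vars_compose2) auto
    then show ?thesis unfolding X_def .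
  qed
  have EX: "(\<integral>\<^sup>+ \<omega>. X n \<omega> \<partial>P) = ennreal (1 / (1 - t * v n))" if n: "n \<in> {1..M}" for n
  proof -
    have n1: "n \<ge> 1" using n by auto
    have "(\<integral>\<^sup>+ \<omega>. X n \<omega> \<partial>P) = (\<integral>\<^sup>+ z. ennreal (exp (t * v n * (cmod z)^2)) \<partial>distr P borel (g n))"
      unfolding X_def by (subst nn_integral_distr[OF gm[OF n1]]) auto
    also have "\<dots> = ennreal (1 / (1 - t * v n))"
      unfolding dis[OF n1] using gauss_mgf[of "t * v n"] v[of n] t by simp
    finally show ?thesis .
  qed
  have prodX: "(\<integral>\<^sup>+ \<omega>. ennreal (exp (t * S \<omega>)) \<partial>P) \<le> ennreal (exp (2 * t * K))"
  proof -
    have "(\<integral>\<^sup>+ \<omega>. ennreal (exp (t * S \<omega>)) \<partial>P) = (\<integral>\<^sup>+ \<omega>. (\<Prod>n\<in>{1..M}. X n \<omega>) \<partial>P)"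
    proof (rule nn_integral_cong)
      fix \<omega>
      have "exp (t * S \<omega>) = (\<Prod>n\<in>{1..M}. exp (t * v n * (cmod (g n \<omega>))^2))"
        unfolding S_def by (simp add: sum_distrib_left exp_sum mult.assoc)
      then show "ennreal (exp (t * S \<omega>)) = (\<Prod>n\<in>{1..M}. X n \<omega>)"
        unfolding X_def by (simp add: prod_ennreal)
    qed
    also have "\<dots> = (\<Prod>n\<in>{1..M}. \<integral>\<^sup>+ \<omega>. X n \<omega> \<partial>P)"
      by (rule P.indep_vars_nn_integral[OF _ indX]) auto
    also have "\<dots> = (\<Prod>n\<in>{1..M}. ennreal (1 / (1 - t * v n)))"
      by (rule prod.cong) (auto simp: EX)
    also have "\<dots> = ennreal (\<Prod>n\<in>{1..M}. 1 / (1 - t * v n))"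
    proof (rule prod_ennreal)
      fix n have "t * v n < 1" using v(2)[of n] by linarith
      then show "0 \<le> 1 / (1 - t * v n)" by simp
    qed
    also have "\<dots> \<le> ennreal (\<Prod>n\<in>{1..M}. exp (2 * t * v n))"
    proof (intro ennreal_leI prod_mono conjI)
      fix n
      have tv: "0 \<le> t * v n" "t * v n \<le> 1/2" using v t by auto
      show "0 \<le> 1 / (1 - t * v n)" using tv by simp
      have "1 / (1 - t * v n) \<le> 1 + 2 * (t * v n)" using recip_bound tv by blast
      also have "\<dots> \<le> exp (2 * (t * v n))" by (rule exp_ge_add_one_self)
      finally show "1 / (1 - t * v n) \<le> exp (2 * t * v n)" by (simp add: mult.assoc)
    qed
    also have "(\<Prod>n\<in>{1..M}. exp (2 * t * v n)) = exp (2 * t * (\<Sum>n\<in>{1..M}. v n))"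
      by (simp add: exp_sum sum_distrib_left)
    also have "\<dots> \<le> exp (2 * t * K)" using mult_left_mono[OF K, of "2 * t"] t by simp
    finally show ?thesis by (simp add: ennreal_leI)
  qed
  have "{\<omega>\<in>space P. L < S \<omega>} \<subseteq> {\<omega>\<in>space P. 1 \<le> ennreal (exp (- t * L)) * ennreal (exp (t * S \<omega>))}"
  proof safe
    fix \<omega> assume "\<omega> \<in> space P" "L < S \<omega>"
    then have "t * L \<le> t * S \<omega>" using t by (intro mult_left_mono) auto
    then have "1 \<le> exp (- t * L) * exp (t * S \<omega>)" by (simp add: exp_add[symmetric])
    then show "1 \<le> ennreal (exp (- t * L)) * ennreal (exp (t * S \<omega>))"
      by (simp add: ennreal_mult'[symmetric])
  qed
  then have "emeasure P {\<omega>\<in>space P. L < S \<omega>} \<le> emeasure P {\<omega>\<in>space P. 1 \<le> ennreal (exp (- t * L)) * ennreal (exp (t * S \<omega>))}"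
    by (rule emeasure_mono) (use Sm in measurable)
  also have "\<dots> \<le> ennreal (exp (- t * L)) * set_nn_integral P (space P) (\<lambda>\<omega>. ennreal (exp (t * S \<omega>)))"
    by (rule nn_integral_Markov_inequality) (use Sm in auto)
  also have "set_nn_integral P (space P) (\<lambda>\<omega>. ennreal (exp (t * S \<omega>))) = (\<integral>\<^sup>+ \<omega>. ennreal (exp (t * S \<omega>)) \<partial>P)"
    by (rule nn_integral_cong) simp
  also have "ennreal (exp (- t * L)) * \<dots> \<le> ennreal (exp (- t * L)) * ennreal (exp (2 * t * K))"
    by (rule mult_left_mono[OF prodX]) simp
  also have "\<dots> = ennreal (exp (- t * L) * exp (2 * t * K))" by (simp add: ennreal_mult'[symmetric])
  finally show ?thesis unfolding S_def .
qed


theorem lemma3p1: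
  fixes s :: real and P :: "'w measure" and g :: "nat \<Rightarrow> 'w \<Rightarrow> complex"
  assumes "s < 1/2"
    and "prob_space P"
    and "prob_space.indep_vars P (\<lambda>_. borel) g {1..}"
    and "\<And>n. n \<ge> 1 \<Longrightarrow> distr P borel (g n) = complex_gaussian"
  shows "\<exists>c > 0. \<exists>C > 0. \<exists>Nstar::nat. Nstar \<ge> 1 \<and>
           (\<forall>N0::nat. \<forall>lam::real. N0 \<ge> Nstar \<and> lam > 0 \<longrightarrow>
              measure P {\<omega> \<in> space P.
                 ereal (real N0 powr (1/2 - s)) *
                   Hs_norm s (\<lambda>n. if n \<ge> N0 then g n \<omega> / complex_of_real (bessel_zero n) else 0)
                 > ereal lam}
              \<le> C * exp (- (lam powr c)))"
proof -
  interpret P: prob_space P by (rule assms(2))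
  obtain a0 where a0: "a0 > 0" "\<forall>n\<ge>1. bessel_zero n \<ge> a0 * real n" using bessel_zero_growth by auto
  define Wb where "Wb = a0 powr (2 * s - 2)"
  define K where "K = a0 powr (2 * s - 2) * 2 powr (1 - 2 * s) / (1 - 2 * s)"
  define t where "t = 1 / (2 * Wb)"
  have Wb: "Wb > 0" unfolding Wb_def using a0 by simp
  have t: "t > 0" unfolding t_def using Wb by simp
  define C where "C = exp (2 * t * K + 1 / (4 * t))"
  have gm: "g n \<in> borel_measurable P" if "n \<ge> 1" for n
    using assms(3) that unfolding P.indep_vars_def by auto
  have Cpos: "0 < C" unfolding C_def by simp
  have main: "measure P {\<omega> \<in> space P.
                 ereal (real N0 powr (1/2 - s)) *
                   Hs_norm s (\<lambda>n. if n \<ge> N0 then g n \<omega> / complex_of_real (bessel_zero n) else 0)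
                 > ereal lam}
              \<le> C * exp (- (lam powr 1))" if h: "2 \<le> N0 \<and> 0 < lam" for N0 :: nat and lam :: real
  proof -
    from h have N0: "N0 \<ge> 2" and lam: "lam > 0" by auto
    define v where "v = (\<lambda>n. (if N0 \<le> n then bessel_zero n powr (2 * s - 2) else 0) * real N0 powr (1 - 2 * s))"
    have w: "(\<forall>n. 0 \<le> v n) \<and> (\<forall>n. v n \<le> Wb) \<and> (\<forall>M. (\<Sum>n\<in>{1..M}. v n) \<le> K)"
      unfolding v_def Wb_def K_def by (rule weights[OF a0 assms(1) N0])
    have tv: "t * v n \<le> 1/2" for n
    proof -
      have "t * v n \<le> t * Wb" using w t by (intro mult_left_mono) auto
      also have "t * Wb = 1/2" unfolding t_def using Wb by simp
      finally show ?thesis .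
    qed
    define A where "A M = {\<omega> \<in> space P. lam^2 < (\<Sum>n\<in>{1..M}. v n * (cmod (g n \<omega>))^2)}" for M
    have Abound: "emeasure P (A M) \<le> ennreal (exp (- t * lam^2) * exp (2 * t * K))" for M
      unfolding A_def using w t tv
      by (intro mgf_bound[OF assms(2,3,4)]) auto
    have Ameas: "A M \<in> sets P" for M
    proof -
      have "(\<lambda>\<omega>. \<Sum>n\<in>{1..M}. v n * (cmod (g n \<omega>))^2) \<in> borel_measurable P"
        by (intro borel_measurable_sum) (auto intro!: borel_measurable_times borel_measurable_power measurable_compose[OF gm borel_measurable_norm])
      then show ?thesis unfolding A_def by measurable
    qed
    have incA: "incseq A"
    proof (rule incseq_SucI)
      fix M
      have "(\<Sum>n\<in>{1..M}. v n * (cmod (g n \<omega>))^2) \<le> (\<Sum>n\<in>{1..Suc M}. v n * (cmod (g n \<omega>))^2)" for \<omega>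
        using w by (intro sum_mono2) auto
      then show "A M \<subseteq> A (Suc M)" unfolding A_def by (auto intro: less_le_trans)
    qed
    let ?E = "{\<omega> \<in> space P. ereal (real N0 powr (1/2 - s)) *
                   Hs_norm s (\<lambda>n. if n \<ge> N0 then g n \<omega> / complex_of_real (bessel_zero n) else 0) > ereal lam}"
    have sub: "?E \<subseteq> (\<Union>M. A M)"
    proof
      fix \<omega> assume "\<omega> \<in> ?E"
      then have om: "\<omega> \<in> space P" and ev: "ereal (real N0 powr (1/2 - s)) *
                   Hs_norm s (\<lambda>n. if n \<ge> N0 then g n \<omega> / complex_of_real (bessel_zero n) else 0) > ereal lam" by auto
      have zpos: "\<forall>n\<ge>1. bessel_zero n > 0"
      proof (intro allI impI)
        fix n :: nat assume "n \<ge> 1"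
        then have "a0 * real n > 0" using a0 by simp
        then show "bessel_zero n > 0" using a0 \<open>n \<ge> 1\<close> by (meson less_le_trans)
      qed
      obtain M where "lam^2 < (\<Sum>n\<in>{1..M}. (if N0 \<le> n then bessel_zero n powr (2 * s - 2) else 0) * real N0 powr (1 - 2 * s) * (cmod (g n \<omega>))^2)"
        using key_sum_event[OF zpos lam _ ev refl] N0 by auto
      then have "\<omega> \<in> A M" unfolding A_def v_def using om by simp
      then show "\<omega> \<in> (\<Union>M. A M)" by auto
    qed
    have "emeasure P (\<Union>M. A M) = (SUP M. emeasure P (A M))"
    proof -
      have "range A \<subseteq> sets P" using Ameas by auto
      from SUP_emeasure_incseq[OF this incA] show ?thesis by simp
    qed
    also have "\<dots> \<le> ennreal (exp (- t * lam^2) * exp (2 * t * K))"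
      by (rule SUP_least) (rule Abound)
    finally have "ennreal (measure P (\<Union>M. A M)) \<le> ennreal (exp (- t * lam^2) * exp (2 * t * K))"
      by (simp add: P.emeasure_eq_measure)
    then have mU: "measure P (\<Union>M. A M) \<le> exp (- t * lam^2) * exp (2 * t * K)"
      by (simp add: ennreal_le_iff)
    have "measure P ?E \<le> measure P (\<Union>M. A M)"
      by (rule P.finite_measure_mono[OF sub]) (use Ameas in auto)
    also note mU
    also have "exp (- t * lam^2) * exp (2 * t * K) \<le> C * exp (- (lam powr 1))"
    proof -
      have "0 \<le> t * (lam - 1 / (2 * t))^2" using t by simp
      also have "t * (lam - 1 / (2 * t))^2 = t * lam^2 - lam + 1 / (4 * t)"
        using t by (simp add: power2_eq_square field_simps)
      finally have "- t * lam^2 + 2 * t * K \<le> 2 * t * K + 1 / (4 * t) + - lam" by simp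
      then have e1: "exp (- t * lam^2 + 2 * t * K) \<le> exp (2 * t * K + 1 / (4 * t) + - lam)" by (simp only: exp_le_cancel_iff)
      have e3: "exp (2 * t * K + 1 / (4 * t) + - lam) = C * exp (- (lam powr 1))"
      proof -
        have "C * exp (- (lam powr 1)) = exp (2 * t * K + 1 / (4 * t)) * exp (- lam)"
          unfolding C_def using lam by simp
        also have "\<dots> = exp (2 * t * K + 1 / (4 * t) + - lam)" by (rule exp_add[symmetric])
        finally show ?thesis by simp
      qed
      have "exp (- t * lam^2) * exp (2 * t * K) = exp (- t * lam^2 + 2 * t * K)" by (rule exp_add[symmetric])
      also note e1
      also note e3
      finally show ?thesis .
    qed
    finally show "measure P ?E \<le> C * exp (- (lam powr 1))" .
  qed
  show ?thesis
    apply (rule exI[of _ "1::real"])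
    apply (rule conjI, simp)
    apply (rule exI[of _ C])
    apply (rule conjI, rule Cpos)
    apply (rule exI[of _ "2::nat"])
    using main by auto
qed

end
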